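(* Fix integers $N\ge 2$ and $b_0\ge 1$ and a real number $m>1$, and set $q_k = 2/(2b_0 m^k-1)$ for $k\ge 0$. For each $K\in\{1,2,\dots\}$, let $\gamma=\gamma(K)\in(0,1)$ denote the solution of the fixed point equations $$\bar p=\frac{\sum_{k=0}^{K}\gamma^k}{\sum_{k=0}^{K}\gamma^k/q_k},\qquad \gamma=1-e^{-(N-1)\bar p}.$$ Then there exists a finite $K_0$ such that $\gamma(K_0)<1/m$, and $\gamma(K)$ is decreasing in $K$ for $K\ge K_0$. Consequently: (i) there exists $K_0$ such that $\gamma<1/m$ for all $K\ge K_0$, including $K=\infty$ (where $\gamma$ for $K=\infty$ is the limit of $\gamma(K)$ as $K\to\infty$); (ii) for $K=\infty$ the mean $\bar\Omega=\mathbb{E}[\Omega]=\sum_{k=0}^{\infty}\gamma^k/q_k$ of the per-packet backoff is finite.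
   Context: This models the backoff of IEEE 802.11 with $N$ saturated nodes, backoff stages $0,\dots,K$, multiplicative factor $m$ and initial contention window $2b_0$; $q_k$ is the attempt probability in stage $k$, $\bar p$ the average attempt rate and $\gamma$ the collision probability. The per-packet backoff is $\Omega=\sum_{k=0}^{\kappa}B_k$, where $B_k$ is the backoff value drawn at stage $k$ (mean $1/q_k$) and $\kappa$ is the highest stage reached by the packet, with $\mathbb{P}[\kappa=k]=\gamma^k-\gamma^{k+1}$ for $k<K$ and $\mathbb{P}[\kappa=K]=\gamma^K$; its mean is $\bar\Omega=\sum_{k=0}^{K}\gamma^k/q_k$. *)

theory Defs
  imports "HOL-Analysis.Analysis"
begin

definition attempt_prob :: "nat \<Rightarrow> real \<Rightarrow> nat \<Rightarrow> real" where
  "attempt_prob b0 m k = 2 / (2 * real b0 * m ^ k - 1)"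

definition avg_rate :: "nat \<Rightarrow> real \<Rightarrow> nat \<Rightarrow> real \<Rightarrow> real" where
  "avg_rate b0 m K g =
     (\<Sum>k\<le>K. g ^ k) / (\<Sum>k\<le>K. g ^ k / attempt_prob b0 m k)"

definition gamma_fp :: "nat \<Rightarrow> nat \<Rightarrow> real \<Rightarrow> nat \<Rightarrow> real" where
  "gamma_fp N b0 m K =
     (THE g. 0 < g \<and> g < 1 \<and>
             g = 1 - exp (- (real N - 1) * avg_rate b0 m K g))"

end

theory Submission
  imports Defs
begin

definition wt :: "nat \<Rightarrow> real \<Rightarrow> nat \<Rightarrow> real" where
  "wt b0 m k = real b0 * m ^ k - 1/2"

definition SA :: "nat \<Rightarrow> real \<Rightarrow> real" where
  "SA K g = (\<Sum>k\<le>K. g ^ k)"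

definition SB :: "nat \<Rightarrow> real \<Rightarrow> nat \<Rightarrow> real \<Rightarrow> real" where
  "SB b0 m K g = (\<Sum>k\<le>K. g ^ k * wt b0 m k)"

lemma cheb:
  fixes w :: "nat \<Rightarrow> real"
  assumes mono: "\<And>i j. i \<le> j \<Longrightarrow> w i \<le> w j" and g: "0 \<le> g" "g \<le> h"
  shows "(\<Sum>k\<le>K. h^k) * (\<Sum>k\<le>K. g^k * w k) \<le> (\<Sum>k\<le>K. g^k) * (\<Sum>k\<le>K. h^k * w k)"
proof (induction K)
  case 0 show ?case by simp
next
  case (Suc K)
  define Ag where "Ag = (\<Sum>k\<le>K. g^k)"
  define Ah where "Ah = (\<Sum>k\<le>K. h^k)"
  define Bg where "Bg = (\<Sum>k\<le>K. g^k * w k)"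
  define Bh where "Bh = (\<Sum>k\<le>K. h^k * w k)"
  have trm: "0 \<le> (w (Suc K) - w k) * (g^k * h^(Suc K) - h^k * g^(Suc K))" if "k \<le> K" for k
  proof -
    obtain d where d: "Suc K = k + d" using \<open>k \<le> K\<close> by (metis le_SucI le_add_diff_inverse)
    have "g^k * h^(Suc K) - h^k * g^(Suc K) = g^k * h^k * (h^d - g^d)"
      unfolding d by (simp add: power_add algebra_simps)
    also have "\<dots> \<ge> 0" using g by (simp add: power_mono)
    finally show ?thesis using mono[of k "Suc K"] that by simp
  qed
  have key: "(\<Sum>k\<le>K. (w (Suc K) - w k) * (g^k * h^(Suc K) - h^k * g^(Suc K)))
     = w (Suc K) * h^(Suc K) * Ag - h^(Suc K) * Bg - w (Suc K) * g^(Suc K) * Ah + g^(Suc K) * Bh"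
    unfolding Ag_def Ah_def Bg_def Bh_def
    by (simp add: algebra_simps sum.distrib sum_subtractf sum_distrib_left sum_distrib_right)
  have X: "0 \<le> (\<Sum>k\<le>K. (w (Suc K) - w k) * (g^k * h^(Suc K) - h^k * g^(Suc K)))"
    by (rule sum_nonneg) (use trm in auto)
  define gS where "gS = g^Suc K"
  define hS where "hS = h^Suc K"
  define wS where "wS = w (Suc K)"
  have X2: "0 \<le> wS * hS * Ag - hS * Bg - wS * gS * Ah + gS * Bh"
    using X unfolding key gS_def hS_def wS_def .
  have IH: "Ah * Bg \<le> Ag * Bh" using Suc.IH unfolding Ag_def Ah_def Bg_def Bh_def .
  have diff: "(Ag+gS)*(Bh+hS*wS) - (Ah+hS)*(Bg+gS*wS) = (Ag*Bh - Ah*Bg) + (wS * hS * Ag - hS * Bg - wS * gS * Ah + gS * Bh)"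
    by (simp add: algebra_simps)
  have S: "(\<Sum>k\<le>Suc K. h^k) = Ah + hS" "(\<Sum>k\<le>Suc K. g^k) = Ag + gS"
    "(\<Sum>k\<le>Suc K. g^k * w k) = Bg + gS * wS" "(\<Sum>k\<le>Suc K. h^k * w k) = Bh + hS * wS"
    unfolding Ag_def Ah_def Bg_def Bh_def gS_def hS_def wS_def by simp_all
  show ?case unfolding S using diff IH X2 by linarith
qed

context
  fixes N b0 :: nat and m :: real
  assumes N: "N \<ge> 2" and b0: "b0 \<ge> 1" and m: "m > 1"
begin

lemma wt_ge: "wt b0 m k \<ge> m^k / 2"
proof -
  have "m^k \<ge> 1" using m by simp
  moreover have "real b0 * m^k \<ge> m^k" using b0 m by simp
  ultimately show ?thesis unfolding wt_def by linarith
qed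

lemma wt_pos: "wt b0 m k > 0"
  using wt_ge[of k] m by (smt (verit) zero_less_power divide_pos_pos)

lemma wt_mono: "i \<le> j \<Longrightarrow> wt b0 m i \<le> wt b0 m j"
  unfolding wt_def using b0 m by (simp add: power_increasing)

lemma wt_less: "i < j \<Longrightarrow> wt b0 m i < wt b0 m j"
  unfolding wt_def using b0 m by (simp add: power_strict_increasing)

lemma div_q: "g ^ k / attempt_prob b0 m k = g ^ k * wt b0 m k"
proof -
  have "2 * real b0 * m ^ k - 1 = 2 * wt b0 m k" unfolding wt_def by simp
  then show ?thesis unfolding attempt_prob_def by simp
qed

lemma avg_eq: "avg_rate b0 m K g = SA K g / SB b0 m K g"
  unfolding avg_rate_def SA_def SB_def by (simp add: div_q)

lemma SA_pos: "0 \<le> g \<Longrightarrow> SA K g > 0"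
  unfolding SA_def by (induction K) (auto intro: add_pos_nonneg)

lemma SB_pos: "0 \<le> g \<Longrightarrow> SB b0 m K g > 0"
proof -
  assume g: "0 \<le> g"
  have nn: "0 \<le> g^k * wt b0 m k" for k using g wt_pos[of k] by simp
  show ?thesis unfolding SB_def
    by (induction K) (auto intro!: add_pos_nonneg nn simp: wt_pos simp del: power_Suc)
qed

lemma avg_pos: "0 \<le> g \<Longrightarrow> avg_rate b0 m K g > 0"
  using SA_pos SB_pos avg_eq by simp

lemma avg_anti: assumes "0 \<le> g" "g \<le> h" shows "avg_rate b0 m K h \<le> avg_rate b0 m K g"
proof -
  have c: "SA K h * SB b0 m K g \<le> SA K g * SB b0 m K h"
    unfolding SA_def SB_def by (rule cheb[OF wt_mono assms])
  have "0 \<le> h" using assms by simp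
  then show ?thesis using c SB_pos[of g K] SB_pos[of h K] assms unfolding avg_eq
    by (simp add: divide_simps mult.commute)
qed

lemma avg_Suc: assumes "0 < g" shows "avg_rate b0 m (Suc K) g < avg_rate b0 m K g"
proof -
  define A where "A = SA K g"
  define B where "B = SB b0 m K g"
  define x where "x = g^(Suc K)"
  define v where "v = wt b0 m (Suc K)"
  have A: "A > 0" and B: "B > 0" unfolding A_def B_def using SA_pos SB_pos assms by auto
  have x: "x > 0" using assms unfolding x_def by simp
  have v: "v > 0" unfolding v_def by (rule wt_pos)
  have "B < A * v"
  proof -
    have "B < (\<Sum>k\<le>K. g^k * v)" unfolding B_def SB_def
      by (rule sum_strict_mono) (auto simp: v_def assms intro!: mult_strict_left_mono wt_less)
    also have "\<dots> = A * v" unfolding A_def SA_def by (simp add: sum_distrib_right)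
    finally show ?thesis .
  qed
  then have "x * B < x * (A * v)" using x by simp
  then have "(A + x) * B < A * (B + x * v)" by (simp add: algebra_simps)
  moreover have "SA (Suc K) g = A + x" "SB b0 m (Suc K) g = B + x * v"
    unfolding A_def x_def SA_def B_def v_def SB_def by simp_all
  ultimately show ?thesis using A B x v unfolding avg_eq A_def[symmetric] B_def[symmetric]
    by (simp add: divide_simps) (smt (verit) mult_pos_pos)
qed

definition R :: "nat \<Rightarrow> real \<Rightarrow> real" where
  "R K g = 1 - exp (- (real N - 1) * avg_rate b0 m K g)"

lemma R_anti: "0 \<le> g \<Longrightarrow> g \<le> h \<Longrightarrow> R K h \<le> R K g"
  unfolding R_def using avg_anti[of g h K] N by (simp add: mult_left_mono)

lemma R_Suc: "0 < g \<Longrightarrow> R (Suc K) g < R K g"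
  unfolding R_def using avg_Suc[of g K] N by (simp add: mult_strict_left_mono)

lemma R_bounds: "0 \<le> g \<Longrightarrow> 0 < R K g \<and> R K g < 1"
proof -
  assume "0 \<le> g"
  then have "0 < (real N - 1) * avg_rate b0 m K g" using avg_pos[of g K] N by simp
  moreover have "- (real N - 1) * avg_rate b0 m K g = - ((real N - 1) * avg_rate b0 m K g)" by (simp add: algebra_simps)
  ultimately show ?thesis unfolding R_def by simp
qed

lemma fp_ex1: "\<exists>!g. 0 < g \<and> g < 1 \<and> g = R K g"
proof -
  have cont: "continuous_on {0..1} (\<lambda>g. R K g - g)"
  proof -
    have "continuous_on {0..1} (\<lambda>g. 1 - exp (- (real N - 1) * (SA K g / SB b0 m K g)) - g)"
      unfolding SA_def SB_def
      by (intro continuous_intros) (use SB_pos[unfolded SB_def] in \<open>auto simp: less_imp_neq[symmetric]\<close>)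
    then show ?thesis unfolding R_def avg_eq .
  qed
  obtain g where g: "0 \<le> g" "g \<le> 1" "R K g - g = 0"
    using IVT2'[of "\<lambda>g. R K g - g" 1 0 0, OF _ _ _ cont] R_bounds[of 0 K] R_bounds[of 1 K] by auto
  have "g \<noteq> 0" "g \<noteq> 1" using g R_bounds[of 0 K] R_bounds[of 1 K] by auto
  with g have ex: "0 < g \<and> g < 1 \<and> g = R K g" by auto
  show ?thesis
  proof (rule ex1I[of _ g])
    show "0 < g \<and> g < 1 \<and> g = R K g" by (rule ex)
    fix h assume h: "0 < h \<and> h < 1 \<and> h = R K h"
    show "h = g"
    proof (rule ccontr)
      assume "h \<noteq> g"
      then consider "h < g" | "g < h" by linarith
      then show False
      proof cases
        case 1 then have "R K g \<le> R K h" using h by (intro R_anti) auto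
        then show False using 1 h ex by linarith
      next
        case 2 then have "R K h \<le> R K g" using ex by (intro R_anti) auto
        then show False using 2 h ex by linarith
      qed
    qed
  qed
qed

lemma gamma_props: "0 < gamma_fp N b0 m K \<and> gamma_fp N b0 m K < 1 \<and>
   gamma_fp N b0 m K = R K (gamma_fp N b0 m K)"
  unfolding gamma_fp_def using theI'[OF fp_ex1[of K]] unfolding R_def by simp

lemma gamma_Suc: "gamma_fp N b0 m (Suc K) < gamma_fp N b0 m K"
proof (rule ccontr)
  let ?g = "gamma_fp N b0 m K" and ?h = "gamma_fp N b0 m (Suc K)"
  assume "\<not> ?h < ?g"
  then have le: "?g \<le> ?h" by simp
  have "?h = R (Suc K) ?h" using gamma_props by blast
  also have "\<dots> \<le> R (Suc K) ?g" using le gamma_props[of K] by (intro R_anti) auto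
  also have "\<dots> < R K ?g" using gamma_props[of K] by (intro R_Suc) auto
  also have "\<dots> = ?g" using gamma_props[of K] by simp
  finally show False using le by simp
qed

lemma SA_geo: "(1 - c) * SA K c = 1 - c ^ Suc K"
proof (induction K)
  case 0 show ?case by (simp add: SA_def)
next
  case (Suc K)
  have "(1 - c) * SA (Suc K) c = (1 - c) * SA K c + (1 - c) * c ^ Suc K"
    by (simp add: SA_def algebra_simps)
  also have "\<dots> = 1 - c ^ Suc (Suc K)" using Suc.IH by (simp add: algebra_simps)
  finally show ?case .
qed

lemma gamma_small: "\<exists>K. gamma_fp N b0 m K < 1 / m"
proof -
  define C where "C = (real N - 1) * (m / (m - 1)) * 2"
  obtain n :: nat where n: "C * m < real n" using reals_Archimedean2 by blast
  show ?thesis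
  proof (rule exI[of _ n], rule ccontr)
    let ?g = "gamma_fp N b0 m n"
    define c where "c = 1 / m"
    assume "\<not> ?g < 1 / m"
    then have ge: "c \<le> ?g" unfolding c_def by simp
    have c0: "0 < c" "c < 1" using m unfolding c_def by auto
    have SAc: "SA n c \<le> m / (m - 1)"
    proof -
      have "(1 - c) * SA n c \<le> 1" using SA_geo[of c n] c0 by simp
      moreover have "1 - c = (m - 1) / m" using m unfolding c_def by (simp add: field_simps)
      ultimately show ?thesis using m by (simp add: field_simps)
    qed
    have SBc: "SB b0 m n c \<ge> (real n + 1) / 2"
    proof -
      have "(\<Sum>k\<le>n. (1/2::real)) \<le> SB b0 m n c" unfolding SB_def
      proof (rule sum_mono)
        fix k
        have "c^k * (m^k/2) = (c*m)^k / 2" by (simp add: power_mult_distrib)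
        also have "\<dots> = 1/2" using m unfolding c_def by simp
        finally have "1/2 = c^k * (m^k/2)" by simp
        also have "\<dots> \<le> c^k * wt b0 m k" using c0 wt_ge by (intro mult_left_mono) auto
        finally show "1/2 \<le> c^k * wt b0 m k" .
      qed
      then show ?thesis by simp
    qed
    have "avg_rate b0 m n ?g \<le> avg_rate b0 m n c" using ge c0 by (intro avg_anti) auto
    also have "\<dots> = SA n c / SB b0 m n c" by (rule avg_eq)
    also have "\<dots> \<le> (m / (m - 1)) / ((real n + 1) / 2)"
      using SAc SBc m by (intro frac_le) (auto simp: SA_pos[of c n] less_imp_le c0)
    finally have p: "avg_rate b0 m n ?g \<le> (m / (m - 1)) / ((real n + 1) / 2)" .
    have "?g = R n ?g" using gamma_props by blast
    also have "\<dots> \<le> (real N - 1) * avg_rate b0 m n ?g"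
    proof -
      have "- (real N - 1) * avg_rate b0 m n ?g = - ((real N - 1) * avg_rate b0 m n ?g)" by (simp add: algebra_simps)
      then show ?thesis unfolding R_def
        using exp_ge_add_one_self[of "- ((real N - 1) * avg_rate b0 m n ?g)"] by (simp only:)
    qed
    also have "\<dots> \<le> (real N - 1) * ((m / (m - 1)) / ((real n + 1) / 2))"
      using p N by (intro mult_left_mono) auto
    also have "\<dots> = C / (real n + 1)" unfolding C_def by (simp add: field_simps)
    also have "\<dots> < 1 / m"
    proof -
      have "C * m < real n + 1" using n by simp
      then show ?thesis using m by (simp add: field_simps)
    qed
    finally show False using ge unfolding c_def by simp
  qed
qed

end

theorem lemma1:
  fixes N b0 :: nat and m :: real
  assumes "N \<ge> 2" and "b0 \<ge> 1" and "m > 1"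
  shows "(\<exists>K0\<ge>1. gamma_fp N b0 m K0 < 1 / m \<and>
            (\<forall>K\<ge>K0. gamma_fp N b0 m (Suc K) < gamma_fp N b0 m K))
       \<and> (\<exists>K0\<ge>1. \<forall>K\<ge>K0. gamma_fp N b0 m K < 1 / m)
       \<and> (\<exists>g_inf. (\<lambda>K. gamma_fp N b0 m K) \<longlonglongrightarrow> g_inf \<and> g_inf < 1 / m
              \<and> summable (\<lambda>k. g_inf ^ k / attempt_prob b0 m k))"
proof -
  let ?G = "\<lambda>K. gamma_fp N b0 m K"
  note props = gamma_props[OF assms]
  have dec: "decseq ?G" by (rule decseq_SucI) (use gamma_Suc[OF assms] less_imp_le in auto)
  obtain K1 where K1: "?G K1 < 1 / m" using gamma_small[OF assms] by blast
  define K0 where "K0 = Suc K1"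
  have K0: "?G K0 < 1 / m" unfolding K0_def using gamma_Suc[OF assms, of K1] K1 by simp
  have all: "\<forall>K\<ge>K0. ?G K < 1 / m" using decseqD[OF dec] K0 by (meson le_less_trans)
  obtain L where L: "?G \<longlonglongrightarrow> L" "\<forall>i. L \<le> ?G i"
    using decseq_convergent[OF dec, of 0] props less_imp_le by blast
  have L0: "0 \<le> L" using L(1) props by (intro LIMSEQ_le_const[OF L(1)]) (auto intro: less_imp_le)
  have L1: "L < 1 / m" using L(2) K0 by (meson le_less_trans)
  have Lm: "L * m < 1" using L1 assms(3) by (simp add: field_simps)
  have "L \<le> L * m" using L0 assms(3) by (simp add: mult_le_cancel_left1)
  then have Llt: "L < 1" using Lm by linarith
  have eq: "(\<lambda>k. L ^ k / attempt_prob b0 m k) = (\<lambda>k. real b0 * (L * m) ^ k - (1/2) * L ^ k)"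
    by (rule ext) (simp add: div_q[OF assms] wt_def power_mult_distrib algebra_simps)
  have "summable (\<lambda>k. L ^ k / attempt_prob b0 m k)"
    unfolding eq using L0 Lm assms(3) L1 Llt
    by (intro summable_diff summable_mult summable_geometric)
       (auto simp: field_simps)
  then have "\<exists>g_inf. ?G \<longlonglongrightarrow> g_inf \<and> g_inf < 1 / m
              \<and> summable (\<lambda>k. g_inf ^ k / attempt_prob b0 m k)" using L(1) L1 by blast
  moreover have "\<exists>K0\<ge>1. ?G K0 < 1 / m \<and> (\<forall>K\<ge>K0. ?G (Suc K) < ?G K)"
    using K0 gamma_Suc[OF assms] unfolding K0_def by auto
  moreover have "\<exists>K0\<ge>1. \<forall>K\<ge>K0. ?G K < 1 / m" using all unfolding K0_def by auto
  ultimately show ?thesis by blast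
qed

end
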